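(* Let $a<b$, $n\ge1$, and let $I_n: a=x_0<x_1<\cdots<x_n=b$ be the uniform partition with $x_{i+1}-x_i=h=\frac{b-a}{n}$ for $i=0,\dots,n-1$. Let $f:[a,b]\rightarrow\mathbb{R}$ be a twice continuously differentiable mapping in $(a,b)$ with $f''\in L^2[a,b]$. Define \[ S(f,I_n)=\frac{h}{2}\sum_{i=0}^{n-1}\left[f\left(\frac{3x_i+x_{i+1}}{4}\right)+f\left(\frac{x_i+3x_{i+1}}{4}\right)\right] \] and $R(f,I_n)=\int_a^b f(x)\,dx-S(f,I_n)$. Then \[ |R(f,I_n)|\leq \frac{(b-a)^{5/2}}{4\sqrt{3}\pi n^2}\|f''\|_2. \]
   Context: $\|g\|_2=\left(\int_a^b g(t)^2\,dt\right)^{1/2}$. *)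

theory Defs
  imports "HOL-Analysis.Analysis"
begin

definition unif_node :: "real \<Rightarrow> real \<Rightarrow> nat \<Rightarrow> nat \<Rightarrow> real" where
  "unif_node a b n i = a + real i * ((b - a) / real n)"

definition quad_S :: "(real \<Rightarrow> real) \<Rightarrow> real \<Rightarrow> real \<Rightarrow> nat \<Rightarrow> real" where
  "quad_S f a b n =
     ((b - a) / real n) / 2 *
     (\<Sum>i<n. f ((3 * unif_node a b n i + unif_node a b n (Suc i)) / 4)
            + f ((unif_node a b n i + 3 * unif_node a b n (Suc i)) / 4))"

definition L2norm :: "(real \<Rightarrow> real) \<Rightarrow> real \<Rightarrow> real \<Rightarrow> real" where
  "L2norm g a b = sqrt (integral {a..b} (\<lambda>t. (g t)\<^sup>2))"

end

theory Submission
  imports Defs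
begin

lemma intcm: "(f::real\<Rightarrow>real) integrable_on S \<Longrightarrow> (\<lambda>x. c * f x) integrable_on S"
  using integrable_on_cmult_left[of f S c] by simp

lemma cs_integral:
  fixes u v :: "real \<Rightarrow> real"
  assumes u2: "(\<lambda>t. (u t)\<^sup>2) integrable_on S" and v2: "(\<lambda>t. (v t)\<^sup>2) integrable_on S"
    and uv: "(\<lambda>t. u t * v t) integrable_on S"
  shows "(integral S (\<lambda>t. u t * v t))\<^sup>2 \<le> integral S (\<lambda>t. (u t)\<^sup>2) * integral S (\<lambda>t. (v t)\<^sup>2)"
proof -
  define A where "A = integral S (\<lambda>t. (u t)\<^sup>2)"
  define B where "B = integral S (\<lambda>t. (v t)\<^sup>2)"
  define C where "C = integral S (\<lambda>t. u t * v t)"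
  have key: "0 \<le> A - 2 * l * C + l\<^sup>2 * B" for l
  proof -
    have eq: "(\<lambda>t. (u t - l * v t)\<^sup>2) = (\<lambda>t. ((u t)\<^sup>2 - (2*l) * (u t * v t)) + l\<^sup>2 * (v t)\<^sup>2)"
      by (auto simp: power2_eq_square algebra_simps)
    have i1: "(\<lambda>t. (u t)\<^sup>2 - (2*l) * (u t * v t)) integrable_on S"
      using u2 uv by (intro integrable_diff) (auto intro: intcm)
    have "0 \<le> integral S (\<lambda>t. (u t - l * v t)\<^sup>2)"
      by (rule integral_nonneg) (auto simp: eq intro!: integrable_add i1 intcm v2)
    also have "\<dots> = A - 2 * l * C + l\<^sup>2 * B"
      unfolding eq A_def B_def C_def
      using u2 v2 uv i1 by (simp add: integral_add integral_diff intcm)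
    finally show ?thesis .
  qed
  have B0: "0 \<le> B" unfolding B_def by (rule integral_nonneg[OF v2]) auto
  show ?thesis
  proof (cases "B = 0")
    case True
    then have "C = 0" using key[of "C + A"] key[of "-(A + 1) - C"] 
      using key[of "(A+1)/(2*C)"] key[of "-(A+1)/(2*C)"]
      by (cases "C = 0") (auto simp: field_simps)
    then show ?thesis using True by (simp add: A_def B_def C_def[symmetric])
  next
    case False
    then have Bp: "B > 0" using B0 by simp
    have "0 \<le> A - 2 * (C/B) * C + (C/B)\<^sup>2 * B" by (rule key)
    then have "0 \<le> A * B - C\<^sup>2" using Bp by (simp add: field_simps power2_eq_square)
    then show ?thesis by (simp add: A_def B_def C_def)
  qed
qed

lemma piece:
  fixes g G f2 :: "real \<Rightarrow> real"
  assumes "a \<le> lo" "lo \<le> hi" "hi \<le> b"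
    and cg: "continuous_on {a..b} g" and cG: "continuous_on {a..b} G"
    and dg: "\<And>x. x \<in> {a<..<b} \<Longrightarrow> (g has_real_derivative G x) (at x)"
    and dG: "\<And>x. x \<in> {a<..<b} \<Longrightarrow> (G has_real_derivative f2 x) (at x)"
  shows "((\<lambda>t. (t-e)\<^sup>2/2 * f2 t) has_integral
     (((hi-e)\<^sup>2/2 * G hi - (hi-e) * g hi) - ((lo-e)\<^sup>2/2 * G lo - (lo-e) * g lo) + integral {lo..hi} g)) {lo..hi}"
proof -
  define \<phi> where "\<phi> t = ((t-e)\<^sup>2/2 * G t - (t-e) * g t) + integral {lo..t} g" for t
  have sub: "{lo..hi} \<subseteq> {a..b}" using assms by auto
  have cg': "continuous_on {lo..hi} g" "continuous_on {lo..hi} G"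
    using cg cG sub continuous_on_subset by blast+
  have "((\<lambda>t. (t-e)\<^sup>2/2 * f2 t) has_integral (\<phi> hi - \<phi> lo)) {lo..hi}"
  proof (rule fundamental_theorem_of_calculus_interior)
    show "lo \<le> hi" by fact
    show "continuous_on {lo..hi} \<phi>"
      unfolding \<phi>_def
      by (intro continuous_intros cg' indefinite_integral_continuous_1 integrable_continuous_real) auto
    fix x assume x: "x \<in> {lo<..<hi}"
    then have xab: "x \<in> {a<..<b}" using assms by auto
    have di: "((\<lambda>u. integral {lo..u} g) has_real_derivative g x) (at x)"
    proof -
      have "((\<lambda>u. integral {lo..u} g) has_vector_derivative g x) (at x within {lo..hi})"
        using x by (intro integral_has_vector_derivative cg') auto
      then have "((\<lambda>u. integral {lo..u} g) has_vector_derivative g x) (at x)"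
        using x by (simp add: at_within_Icc_at)
      then show ?thesis by (simp add: has_real_derivative_iff_has_vector_derivative)
    qed
    have "(\<phi> has_real_derivative (x-e)\<^sup>2/2 * f2 x) (at x)"
      unfolding \<phi>_def
      by (rule derivative_eq_intros dg[OF xab] dG[OF xab] di refl | simp)+
    then show "(\<phi> has_vector_derivative (x-e)\<^sup>2/2 * f2 x) (at x)"
      by (simp add: has_real_derivative_iff_has_vector_derivative)
  qed
  then show ?thesis by (simp add: \<phi>_def algebra_simps)
qed

lemma sum_integrals:
  fixes f :: "real \<Rightarrow> real"
  assumes q: "0 \<le> q" and int: "f integrable_on {a..a+real N*q}"
  shows "(\<Sum>k<N. integral {a+real k*q..a+real (Suc k)*q} f) = integral {a..a+real N*q} f"
  using int
proof (induction N)
  case 0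
  then show ?case by simp
next
  case (Suc N)
  have "f integrable_on {a..a+real N*q}"
    by (rule integrable_subinterval_real[OF Suc.prems]) (use q in \<open>auto intro: mult_right_mono\<close>)
  then have "(\<Sum>k<N. integral {a+real k*q..a+real (Suc k)*q} f) = integral {a..a+real N*q} f"
    by (rule Suc.IH)
  moreover have "integral {a..a+real N*q} f + integral {a+real N*q..a+real (Suc N)*q} f
      = integral {a..a+real (Suc N)*q} f"
    by (rule Henstock_Kurzweil_Integration.integral_combine[OF _ _ Suc.prems]) (use q in \<open>auto intro: mult_right_mono\<close>)
  ultimately show ?case by simp
qed

lemma holder:
  fixes f' f2 :: "real \<Rightarrow> real"
  assumes "a < s" "s \<le> t" "t < b"
    and df': "\<And>x. x \<in> {a<..<b} \<Longrightarrow> (f' has_real_derivative f2 x) (at x)"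
    and c2: "continuous_on {a<..<b} f2"
    and i2: "(\<lambda>t. (f2 t)\<^sup>2) integrable_on {a..b}"
  shows "\<bar>f' t - f' s\<bar> \<le> sqrt ((t - s) * integral {a..b} (\<lambda>t. (f2 t)\<^sup>2))"
proof -
  have sub: "{s..t} \<subseteq> {a<..<b}" using assms by auto
  have cf': "continuous_on {s..t} f'"
    by (rule continuous_at_imp_continuous_on) (use df' sub in \<open>blast intro: DERIV_isCont\<close>)
  have cf2: "continuous_on {s..t} f2" using c2 sub continuous_on_subset by blast
  have ftc: "(f2 has_integral (f' t - f' s)) {s..t}"
    apply (rule fundamental_theorem_of_calculus_interior[OF \<open>s \<le> t\<close> cf'])
    apply (subst has_real_derivative_iff_has_vector_derivative[symmetric])
    apply (rule df')
    using assms by auto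
  have i2': "(\<lambda>t. (f2 t)\<^sup>2) integrable_on {s..t}"
    using i2 by (rule integrable_subinterval_real) (use assms in auto)
  have "(integral {s..t} (\<lambda>x. 1 * f2 x))\<^sup>2 \<le> integral {s..t} (\<lambda>x. 1\<^sup>2) * integral {s..t} (\<lambda>x. (f2 x)\<^sup>2)"
    by (rule cs_integral[of "\<lambda>_. 1" _ f2]) (use ftc i2' in auto)
  also have "\<dots> \<le> (t - s) * integral {a..b} (\<lambda>t. (f2 t)\<^sup>2)"
    using assms by (intro mult_mono integral_subset_le i2 i2' integral_nonneg) auto
  finally have "(f' t - f' s)\<^sup>2 \<le> (t - s) * integral {a..b} (\<lambda>t. (f2 t)\<^sup>2)"
    using ftc by (simp add: integral_unique)
  then show ?thesis using real_sqrt_le_mono by fastforce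
qed

lemma regular:
  fixes f f' f2 :: "real \<Rightarrow> real"
  assumes ab: "a < b"
    and df: "\<And>x. x \<in> {a<..<b} \<Longrightarrow> (f has_real_derivative f' x) (at x)"
    and df': "\<And>x. x \<in> {a<..<b} \<Longrightarrow> (f' has_real_derivative f2 x) (at x)"
    and c2: "continuous_on {a<..<b} f2"
    and i2: "(\<lambda>t. (f2 t)\<^sup>2) integrable_on {a..b}"
  obtains g G where "continuous_on {a..b} g" "continuous_on {a..b} G"
    "\<And>x. x \<in> {a<..<b} \<Longrightarrow> g x = f x" "\<And>x. x \<in> {a<..<b} \<Longrightarrow> G x = f' x"
proof -
  define I where "I = integral {a..b} (\<lambda>t. (f2 t)\<^sup>2)"
  have I0: "0 \<le> I" unfolding I_def by (rule integral_nonneg[OF i2]) auto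
  have hol: "\<bar>f' t - f' s\<bar> \<le> sqrt (\<bar>t - s\<bar> * I)" if "s \<in> {a<..<b}" "t \<in> {a<..<b}" for s t
  proof (cases "s \<le> t")
    case True
    then show ?thesis using holder[of a s t b f' f2] that df' c2 i2 by (auto simp: I_def)
  next
    case False
    then show ?thesis using holder[of a t s b f' f2] that df' c2 i2 by (auto simp: I_def abs_minus_commute)
  qed
  have uc': "uniformly_continuous_on {a<..<b} f'"
    unfolding uniformly_continuous_on_def
  proof (intro allI impI)
    fix e :: real assume e: "e > 0"
    show "\<exists>d>0. \<forall>x\<in>{a<..<b}. \<forall>x'\<in>{a<..<b}. dist x' x < d \<longrightarrow> dist (f' x') (f' x) < e"
    proof (intro exI[of _ "e\<^sup>2 / (I + 1)"] conjI ballI impI)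
      show "e\<^sup>2 / (I + 1) > 0" using e I0 by simp
      fix x x' assume x: "x \<in> {a<..<b}" and x': "x' \<in> {a<..<b}" and d: "dist x' x < e\<^sup>2 / (I + 1)"
      have "\<bar>x' - x\<bar> * I \<le> e\<^sup>2 / (I + 1) * I"
        using d I0 by (intro mult_right_mono) (auto simp: dist_real_def)
      also have "\<dots> < e\<^sup>2"
        using e I0 by (simp add: field_simps)
      finally have "sqrt (\<bar>x' - x\<bar> * I) < e"
        using e by (metis abs_of_pos real_sqrt_abs real_sqrt_less_mono)
      then show "dist (f' x') (f' x) < e"
        using hol[OF x x'] by (simp add: dist_real_def)
    qed
  qed
  obtain G where ucG: "uniformly_continuous_on (closure {a<..<b}) G"
      and GE: "\<And>x. x \<in> {a<..<b} \<Longrightarrow> f' x = G x"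
    using uniformly_continuous_on_extension_on_closure[OF uc'] by metis
  have cG: "continuous_on {a..b} G"
    using ucG ab by (simp add: uniformly_continuous_imp_continuous)
  have "bounded (G ` {a..b})"
    by (intro compact_imp_bounded compact_continuous_image cG) auto
  then obtain B where B: "B > 0" "\<And>x. x \<in> {a..b} \<Longrightarrow> \<bar>G x\<bar> \<le> B"
    unfolding bounded_pos by auto
  have lip: "\<bar>f t - f s\<bar> \<le> B * \<bar>t - s\<bar>" if s: "s \<in> {a<..<b}" and t: "t \<in> {a<..<b}" and st: "s < t" for s t
  proof -
    have "{s..t} \<subseteq> {a<..<b}" using s t by auto
    then have dd: "\<And>x. x \<in> {s..t} \<Longrightarrow> (f has_real_derivative f' x) (at x)" using df by auto
    have cf: "continuous_on {s..t} f"
      by (rule continuous_at_imp_continuous_on) (use dd in \<open>blast intro: DERIV_isCont\<close>)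
    have dif: "\<And>x. s < x \<Longrightarrow> x < t \<Longrightarrow> f differentiable (at x)"
      using dd unfolding real_differentiable_def by (meson atLeastAtMost_iff less_imp_le)
    obtain l z where z: "s < z" "z < t" "(f has_real_derivative l) (at z)" "f t - f s = (t - s) * l"
      using MVT[OF st cf dif] by blast
    have "l = f' z" using z dd[of z] DERIV_unique by auto
    also have "\<dots> = G z" using GE[of z] s t z by auto
    finally have "\<bar>l\<bar> \<le> B" using B(2)[of z] s t z by auto
    then show ?thesis using z st by (simp add: abs_mult mult.commute mult_right_mono)
  qed
  have uc: "uniformly_continuous_on {a<..<b} f"
    unfolding uniformly_continuous_on_def
  proof (intro allI impI)
    fix e :: real assume e: "e > 0"
    show "\<exists>d>0. \<forall>x\<in>{a<..<b}. \<forall>x'\<in>{a<..<b}. dist x' x < d \<longrightarrow> dist (f x') (f x) < e"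
    proof (intro exI[of _ "e / B"] conjI ballI impI)
      show "e / B > 0" using e B by simp
      fix x x' assume x: "x \<in> {a<..<b}" and x': "x' \<in> {a<..<b}" and d: "dist x' x < e / B"
      have "\<bar>f x' - f x\<bar> \<le> B * \<bar>x' - x\<bar>"
        using lip[OF x x'] lip[OF x' x] by (cases x x' rule: linorder_cases) (auto simp: abs_minus_commute)
      also have "\<dots> < e" using d B by (simp add: dist_real_def field_simps)
      finally show "dist (f x') (f x) < e" by (simp add: dist_real_def)
    qed
  qed
  obtain g where ucg: "uniformly_continuous_on (closure {a<..<b}) g"
      and gE: "\<And>x. x \<in> {a<..<b} \<Longrightarrow> f x = g x"
    using uniformly_continuous_on_extension_on_closure[OF uc] by metis
  have cg: "continuous_on {a..b} g"
    using ucg ab by (simp add: uniformly_continuous_imp_continuous)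
  show ?thesis using that[OF cg cG] gE GE by metis
qed

theorem theorem3p2:
  fixes f f' f'' :: "real \<Rightarrow> real" and a b :: real and n :: nat
  assumes "a < b" and "n \<ge> 1"
    and "\<And>x. x \<in> {a<..<b} \<Longrightarrow> (f has_real_derivative f' x) (at x)"
    and "\<And>x. x \<in> {a<..<b} \<Longrightarrow> (f' has_real_derivative f'' x) (at x)"
    and "continuous_on {a<..<b} f''"
    and "(\<lambda>t. (f'' t)\<^sup>2) integrable_on {a..b}"
  shows "f integrable_on {a..b} \<and>
         \<bar>integral {a..b} f - quad_S f a b n\<bar>
           \<le> (b - a) powr (5/2) / (4 * sqrt 3 * pi * (real n)\<^sup>2) * L2norm f'' a b"
proof -
  note ab = assms(1) and n1 = assms(2) and df = assms(3) and df' = assms(4)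
    and c2 = assms(5) and i2 = assms(6)
  obtain g G where cg: "continuous_on {a..b} g" and cG: "continuous_on {a..b} G"
    and gE: "\<And>x. x \<in> {a<..<b} \<Longrightarrow> g x = f x" and GE: "\<And>x. x \<in> {a<..<b} \<Longrightarrow> G x = f' x"
    using regular[OF ab df df' c2 i2] by metis
  have dg: "(g has_real_derivative G x) (at x)" if x: "x \<in> {a<..<b}" for x
    using has_field_derivative_transform_within_open[OF df[OF x] open_greaterThanLessThan x, of g]
      gE GE[OF x] by auto
  have dG: "(G has_real_derivative f'' x) (at x)" if x: "x \<in> {a<..<b}" for x
    using has_field_derivative_transform_within_open[OF df'[OF x] open_greaterThanLessThan x, of G]
      GE by auto
  have ig: "g integrable_on {a..b}" by (rule integrable_continuous_real[OF cg])
  have spike: "\<And>x. x \<in> {a..b} - {a,b} \<Longrightarrow> f x = g x" using gE by auto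
  have intf: "f integrable_on {a..b}"
    by (rule integrable_spike_finite[of "{a,b}", OF _ spike ig]) simp
  have intfg: "integral {a..b} f = integral {a..b} g"
    by (rule integral_spike[OF negligible_finite[of "{a,b}"]]) (use gE in auto)
  define q where "q = (b - a) / (4 * real n)"
  have q: "q > 0" using ab n1 by (simp add: q_def)
  define z where "z k = a + real k * q" for k
  have zb: "z (4*n) = b" using n1 by (simp add: z_def q_def)
  have z_in: "z k \<in> {a<..<b}" if "0 < k" "k < 4*n" for k
  proof -
    have "real k * q < real (4*n) * q" using that q by (intro mult_strict_right_mono) auto
    then show ?thesis using that q zb by (auto simp: z_def)
  qed
  have node: "unif_node a b n i = z (4*i)" for i
    using n1 by (simp add: unif_node_def z_def q_def)
  have n1': "(3 * z (4*i) + z (4*Suc i)) / 4 = z (4*i+1)" "(z (4*i) + 3 * z (4*Suc i)) / 4 = z (4*i+3)" for i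
    by (simp_all add: z_def algebra_simps)
  have quad: "quad_S f a b n = 2 * q * (\<Sum>i<n. g (z (4*i+1)) + g (z (4*i+3)))"
  proof -
    have "quad_S f a b n = 2 * q * (\<Sum>i<n. f (z (4*i+1)) + f (z (4*i+3)))"
      unfolding quad_S_def node n1' using n1 by (simp add: q_def field_simps)
    also have "\<dots> = 2 * q * (\<Sum>i<n. g (z (4*i+1)) + g (z (4*i+3)))"
    proof (intro arg_cong[where f="\<lambda>x. 2*q*x"] sum.cong refl)
      fix i assume "i \<in> {..<n}"
      then have "0 < 4*i+1" "4*i+1 < 4*n" "0 < 4*i+3" "4*i+3 < 4*n" by auto
      then show "f (z (4*i+1)) + f (z (4*i+3)) = g (z (4*i+1)) + g (z (4*i+3))"
        using gE z_in by metis
    qed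
    finally show ?thesis .
  qed
  define e where "e k = z (2 * ((k+1) div 2))" for k
  define J where "J k = integral {z k..z (Suc k)} (\<lambda>t. (t - e k)\<^sup>2/2 * f'' t)" for k
  define P where "P k = ((z (Suc k) - e k)\<^sup>2/2 * G (z (Suc k)) - (z (Suc k) - e k) * g (z (Suc k)))
     - ((z k - e k)\<^sup>2/2 * G (z k) - (z k - e k) * g (z k))" for k
  define A where "A k = integral {z k..z (Suc k)} (\<lambda>t. (f'' t)\<^sup>2)" for k
  define I where "I = integral {a..b} (\<lambda>t. (f'' t)\<^sup>2)"
  have zmono: "z k \<le> z (Suc k)" for k using q by (simp add: z_def)
  have zrange: "a \<le> z k" "z (Suc k) \<le> b" if "k < 4*n" for k
  proof -
    show "a \<le> z k" using q by (simp add: z_def)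
    have "real (Suc k) * q \<le> real (4*n) * q" using that q by (intro mult_right_mono) auto
    then show "z (Suc k) \<le> b" using zb by (simp add: z_def)
  qed
  have hasJ: "((\<lambda>t. (t - e k)\<^sup>2/2 * f'' t) has_integral (P k + integral {z k..z (Suc k)} g)) {z k..z (Suc k)}"
    if "k < 4*n" for k
    unfolding P_def
    by (rule piece[OF zrange(1)[OF that] zmono zrange(2)[OF that] cg cG dg dG])
  have Jeq: "J k = P k + integral {z k..z (Suc k)} g" if "k < 4*n" for k
    unfolding J_def using hasJ[OF that] by (rule integral_unique)
  have ek: "e k = z k \<or> e k = z (Suc k)" for k
  proof -
    have "2 * ((k+1) div 2) = k \<or> 2 * ((k+1) div 2) = Suc k" by presburger
    then show ?thesis by (auto simp: e_def)
  qed
  have P4: "P (4*i) + P (4*i+1) + P (4*i+2) + P (4*i+3) = - 2 * q * (g (z (4*i+1)) + g (z (4*i+3)))" for i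
  proof -
    have "e (4*i) = z (4*i)" "e (4*i+1) = z (4*i+2)" "e (4*i+2) = z (4*i+2)" "e (4*i+3) = z (4*i+4)"
      unfolding e_def by (simp_all add: algebra_simps z_def)
    then show ?thesis unfolding P_def by (simp add: z_def algebra_simps power2_eq_square)
  qed
  have sumP: "(\<Sum>k<4*n. P k) = - 2 * q * (\<Sum>i<n. g (z (4*i+1)) + g (z (4*i+3)))"
  proof -
    have "(\<Sum>k<4*n. P k) = (\<Sum>i<n. sum P {i*4..<i*4+4})"
      using sum.nat_group[of P 4 n] by (simp add: mult.commute)
    also have "\<dots> = (\<Sum>i<n. - 2 * q * (g (z (4*i+1)) + g (z (4*i+3))))"
    proof (rule sum.cong[OF refl])
      fix i
      have "{i*4..<i*4+4} = {4*i, 4*i+1, 4*i+2, 4*(i::nat)+3}" by auto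
      then show "sum P {i*4..<i*4+4} = - 2 * q * (g (z (4*i+1)) + g (z (4*i+3)))"
        using P4[of i] by (simp add: algebra_simps)
    qed
    also have "\<dots> = - 2 * q * (\<Sum>i<n. g (z (4*i+1)) + g (z (4*i+3)))"
      by (simp add: sum_distrib_left)
    finally show ?thesis .
  qed
  have sumg: "(\<Sum>k<4*n. integral {z k..z (Suc k)} g) = integral {a..b} g"
    using sum_integrals[of q g a "4*n"] q ig zb by (simp add: z_def)
  have sumA: "(\<Sum>k<4*n. A k) = I"
    using sum_integrals[of q "\<lambda>t. (f'' t)\<^sup>2" a "4*n"] q i2 zb by (simp add: z_def A_def I_def)
  have R: "integral {a..b} f - quad_S f a b n = (\<Sum>k<4*n. J k)"
    using Jeq sumP sumg by (simp add: intfg quad sum.distrib)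
  have A0: "0 \<le> A k" if "k < 4*n" for k
    unfolding A_def by (rule integral_nonneg) (use zrange[OF that] in \<open>auto intro!: integrable_subinterval_real[OF i2]\<close>)
  have I0: "0 \<le> I" unfolding I_def by (rule integral_nonneg[OF i2]) auto
  have Jb: "\<bar>J k\<bar> \<le> sqrt (q^5/4) * sqrt (A k)" if k: "k < 4*n" for k
  proof -
    have sub: "{z k..z (Suc k)} \<subseteq> {a..b}" using zrange[OF k] by auto
    have hu2: "(\<lambda>t. ((t - e k)\<^sup>2/2)\<^sup>2) integrable_on {z k..z (Suc k)}"
      by (intro integrable_continuous_real continuous_intros) auto
    have hv2: "(\<lambda>t. (f'' t)\<^sup>2) integrable_on {z k..z (Suc k)}"
      by (rule integrable_subinterval_real[OF i2 sub])
    have huv: "(\<lambda>t. (t - e k)\<^sup>2/2 * f'' t) integrable_on {z k..z (Suc k)}"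
      using hasJ[OF k] by blast
    have cs: "(J k)\<^sup>2 \<le> integral {z k..z (Suc k)} (\<lambda>t. ((t - e k)\<^sup>2/2)\<^sup>2) * A k"
      unfolding J_def A_def using cs_integral[OF hu2 hv2 huv] by simp
    have dz: "z (Suc k) - z k = q" by (simp add: z_def algebra_simps)
    have pt: "((t - e k)\<^sup>2/2)\<^sup>2 \<le> q^4/4" if t: "t \<in> {z k..z (Suc k)}" for t
    proof -
      have "\<bar>t - e k\<bar> \<le> q" using ek[of k] t dz by auto
      then have "(t - e k)\<^sup>2 \<le> q\<^sup>2" using q by (metis abs_le_square_iff abs_of_pos)
      then have "((t - e k)\<^sup>2)\<^sup>2 \<le> (q\<^sup>2)\<^sup>2" by (rule power_mono[OF _ zero_le_power2])
      then show ?thesis by (simp add: power_divide power2_eq_square[of 2])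
    qed
    have "integral {z k..z (Suc k)} (\<lambda>t. ((t - e k)\<^sup>2/2)\<^sup>2) \<le> integral {z k..z (Suc k)} (\<lambda>t. q^4/4)"
      by (rule integral_le[OF hu2]) (use pt in auto)
    also have "\<dots> = q * (q^4/4)" using zmono[of k] dz by simp
    also have "\<dots> = q^5/4" by (simp add: eval_nat_numeral)
    finally have "(J k)\<^sup>2 \<le> q^5/4 * A k"
      using cs A0[OF k] by (meson mult_right_mono order_trans)
    then have "\<bar>J k\<bar> \<le> sqrt (q^5/4 * A k)"
      by (intro real_le_rsqrt) simp
    then show ?thesis by (simp only: real_sqrt_mult)
  qed
  have "\<bar>\<Sum>k<4*n. J k\<bar> \<le> (\<Sum>k<4*n. \<bar>J k\<bar>)" by (rule sum_abs)
  also have "\<dots> \<le> (\<Sum>k<4*n. sqrt (q^5/4) * sqrt (A k))" by (intro sum_mono Jb) auto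
  also have "\<dots> = sqrt (q^5/4) * (\<Sum>k<4*n. sqrt (A k))" by (simp add: sum_distrib_left)
  also have "\<dots> \<le> sqrt (q^5/4) * sqrt (real (4*n) * I)"
  proof (intro mult_left_mono real_le_rsqrt)
    have "(\<Sum>k<4*n. 1 * sqrt (A k))\<^sup>2 \<le> (\<Sum>k<4*n. 1\<^sup>2) * (\<Sum>k<4*n. (sqrt (A k))\<^sup>2)"
      by (rule Cauchy_Schwarz_ineq_sum)
    moreover have "(\<Sum>k<4*n. (sqrt (A k))\<^sup>2) = I"
      using A0 sumA by (metis (no_types, lifting) lessThan_iff real_sqrt_pow2 sum.cong)
    ultimately show "(\<Sum>k<4*n. sqrt (A k))\<^sup>2 \<le> real (4*n) * I"
      by simp
  qed (use q in auto)
  also have "\<dots> = sqrt (q^5 * real n) * sqrt I"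
    by (simp add: real_sqrt_mult[symmetric] algebra_simps)
  finally have main: "\<bar>integral {a..b} f - quad_S f a b n\<bar> \<le> sqrt (q^5 * real n) * sqrt I"
    using R by simp
  have const: "sqrt (q^5 * real n) \<le> (b - a) powr (5/2) / (4 * sqrt 3 * pi * (real n)\<^sup>2)"
  proof -
    define c where "c = b - a"
    have c: "c > 0" using ab by (simp add: c_def)
    have nn: "real n > 0" using n1 by simp
    have pw: "c powr (5/2) = sqrt (c^5)"
      using c by (simp add: powr_half_sqrt_powr[of c 5, simplified] powr_numeral)
    have den: "4 * sqrt 3 * pi * (real n)\<^sup>2 = sqrt (48 * pi\<^sup>2 * (real n)^4)"
    proof -
      have "48 * pi\<^sup>2 * (real n)^4 = (4 * pi * (real n)\<^sup>2)\<^sup>2 * 3" by (simp add: power2_eq_square power4_eq_xxxx)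
      then have "sqrt (48 * pi\<^sup>2 * (real n)^4) = sqrt ((4 * pi * (real n)\<^sup>2)\<^sup>2) * sqrt 3"
        by (simp only: real_sqrt_mult)
      moreover have "sqrt ((4 * pi * (real n)\<^sup>2)\<^sup>2) = 4 * pi * (real n)\<^sup>2"
        using pi_gt_zero by (intro real_sqrt_unique) auto
      ultimately show ?thesis by simp
    qed
    have "q^5 * real n = c^5 / (1024 * (real n)^4)"
      using nn by (simp add: q_def c_def field_simps power_divide eval_nat_numeral)
    also have "\<dots> \<le> c^5 / (48 * pi\<^sup>2 * (real n)^4)"
    proof (rule divide_left_mono)
      have "pi\<^sup>2 \<le> 4\<^sup>2" using pi_less_4 pi_gt_zero by (intro power_mono) auto
      then show "48 * pi\<^sup>2 * (real n)^4 \<le> 1024 * (real n)^4" using nn by simp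
    qed (use c nn in auto)
    finally have "sqrt (q^5 * real n) \<le> sqrt (c^5 / (48 * pi\<^sup>2 * (real n)^4))"
      by (rule real_sqrt_le_mono)
    also have "\<dots> = c powr (5/2) / (4 * sqrt 3 * pi * (real n)\<^sup>2)"
      by (simp add: pw den real_sqrt_divide)
    finally show ?thesis by (simp add: c_def)
  qed
  have "sqrt (q^5 * real n) * sqrt I \<le> (b - a) powr (5/2) / (4 * sqrt 3 * pi * (real n)\<^sup>2) * L2norm f'' a b"
    unfolding L2norm_def I_def[symmetric] by (rule mult_right_mono[OF const]) (use I0 in auto)
  then show ?thesis using main intf by linarith
qed

end
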